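(* Let $K$ be a field of any characteristic and let $I_A\subset K[x_1,\ldots,x_n]$ be a toric ideal of height $r\ge 2$. If $I_A$ is a set-theoretic complete intersection on binomials, then $I_A$ is radical splittable.
   Context: $A=\{{\bf a}_1,\ldots,{\bf a}_n\}\subset\mathbb{Z}^m$ is a vector configuration with $\ker_{\mathbb{Z}}(A)\cap\mathbb{N}^n=\{{\bf 0}\}$, where $\ker_{\mathbb{Z}}(A)=\{{\bf u}\in\mathbb{Z}^n\mid\sum u_i{\bf a}_i={\bf 0}\}$; $I_A$ is the kernel of $K[x_1,\ldots,x_n]\to K[t_1^{\pm1},\ldots,t_m^{\pm1}]$, $x_i\mapsto{\bf t}^{{\bf a}_i}$. The height of $I_A$ equals $\dim_{\mathbb{Q}}\ker_{\mathbb{Q}}(A)$. The binomial arithmetical rank $\mathrm{bar}(I_A)$ is the smallest $t$ such that there exist binomials $B_1,\ldots,B_t\in I_A$ with $I_A=\mathrm{rad}(B_1,\ldots,B_t)$; $I_A$ is a set-theoretic complete intersection on binomials if $\mathrm{bar}(I_A)=\mathrm{ht}(I_A)$. $I_A$ is radical splittable if there exist toric ideals $I_{A_1},I_{A_2}\subset K[x_1,\ldots,x_n]$ with $I_A=\mathrm{rad}(I_{A_1}+I_{A_2})$ and $I_{A_i}\ne I_A$ for $i=1,2$. *)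

theory Defs
  imports Complex_Main "HOL-Library.Poly_Mapping" "HOL-Library.Function_Algebras"
begin

text \<open>Polynomial ring K[x_i | i in 'n] with 'n a finite type (n = CARD('n)):
  polynomials are finitely supported maps from exponent vectors ('n =>0 nat) to K.\<close>

type_synonym ('n, 'k) mpoly = "('n \<Rightarrow>\<^sub>0 nat) \<Rightarrow>\<^sub>0 'k"

text \<open>A vector configuration A = {a_1,...,a_n} in Z^m is given as a map
  A :: 'n => 'c => int  (A i = a_i, coordinates indexed by 'c).
  The degree of an exponent vector u is A u = sum_i u_i a_i.\<close>

definition cfg_deg :: "('n::finite \<Rightarrow> 'c \<Rightarrow> int) \<Rightarrow> ('n \<Rightarrow>\<^sub>0 nat) \<Rightarrow> ('c \<Rightarrow> int)" where
  "cfg_deg A u = (\<lambda>j. \<Sum>i\<in>UNIV. int (Poly_Mapping.lookup u i) * A i j)"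

text \<open>Toric ideal I_A: kernel of the K-algebra map x_i |-> t^(a_i) into the
  Laurent polynomial ring; the image of f has coefficient of t^w equal to the
  sum of the coefficients of f at exponents u with A u = w.\<close>

definition toric_ideal :: "('n::finite \<Rightarrow> 'c \<Rightarrow> int) \<Rightarrow> ('n, 'k::field) mpoly set" where
  "toric_ideal A = {f. \<forall>w. (\<Sum>u\<in>{u \<in> Poly_Mapping.keys f. cfg_deg A u = w}. Poly_Mapping.lookup f u) = 0}"

definition pointed_cfg :: "('n::finite \<Rightarrow> 'c \<Rightarrow> int) \<Rightarrow> bool" where
  "pointed_cfg A \<longleftrightarrow> (\<forall>u::'n \<Rightarrow> nat. (\<forall>j. (\<Sum>i\<in>UNIV. int (u i) * A i j) = 0) \<longrightarrow> (\<forall>i. u i = 0))"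

text \<open>Height of I_A, which equals dim_Q ker_Q(A).\<close>

definition toric_height :: "('n::finite \<Rightarrow> 'c \<Rightarrow> int) \<Rightarrow> nat" where
  "toric_height A =
     vector_space.dim (\<lambda>(c::rat) (x::'n \<Rightarrow> rat) i. c * x i)
       {x :: 'n \<Rightarrow> rat. \<forall>j. (\<Sum>i\<in>UNIV. x i * of_int (A i j)) = 0}"

definition monom :: "('n \<Rightarrow>\<^sub>0 nat) \<Rightarrow> ('n, 'k::field) mpoly" where
  "monom u = Poly_Mapping.single u 1"

definition is_binomial :: "('n, 'k::field) mpoly \<Rightarrow> bool" where
  "is_binomial f \<longleftrightarrow> (\<exists>u v. f = monom u - monom v)"

definition gen_ideal :: "'a::comm_ring_1 set \<Rightarrow> 'a set" where
  "gen_ideal S = {f. \<exists>F c. finite F \<and> F \<subseteq> S \<and> f = (\<Sum>s\<in>F. c s * s)}"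

definition rad :: "'a::comm_ring_1 set \<Rightarrow> 'a set" where
  "rad I = {f. \<exists>k::nat. f ^ k \<in> I}"

definition bar :: "('n, 'k::field) mpoly set \<Rightarrow> nat" where
  "bar I = (LEAST t. \<exists>Bs. length Bs = t \<and> (\<forall>B\<in>set Bs. is_binomial B \<and> B \<in> I)
                            \<and> I = rad (gen_ideal (set Bs)))"

definition stci_binomials :: "('n::finite \<Rightarrow> 'c \<Rightarrow> int) \<Rightarrow> 'k::field itself \<Rightarrow> bool" where
  "stci_binomials A _ \<longleftrightarrow> bar (toric_ideal A :: ('n, 'k) mpoly set) = toric_height A"

text \<open>Radical splittable: toric ideals I_{A_1}, I_{A_2} (A_i subset Z^{m_i}, encoded as
  maps 'n => nat => int vanishing at coordinates >= m_i).\<close>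

definition radical_splittable :: "('n::finite, 'k::field) mpoly set \<Rightarrow> bool" where
  "radical_splittable I \<longleftrightarrow>
     (\<exists>(A1 :: 'n \<Rightarrow> nat \<Rightarrow> int) (A2 :: 'n \<Rightarrow> nat \<Rightarrow> int) m1 m2.
        (\<forall>i j. m1 \<le> j \<longrightarrow> A1 i j = 0) \<and> (\<forall>i j. m2 \<le> j \<longrightarrow> A2 i j = 0) \<and>
        I = rad {f + g | f g. f \<in> toric_ideal A1 \<and> g \<in> toric_ideal A2} \<and>
        toric_ideal A1 \<noteq> I \<and> toric_ideal A2 \<noteq> I)"

end

theory Submission
  imports Defs
begin


definition tker :: "(('n \<Rightarrow>\<^sub>0 nat) \<Rightarrow> 'g::comm_monoid_add) \<Rightarrow> ('n, 'k::field) mpoly set" where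
  "tker d = {f. \<forall>w. (\<Sum>u\<in>{u \<in> Poly_Mapping.keys f. d u = w}. Poly_Mapping.lookup f u) = 0}"

definition hmap :: "(('n \<Rightarrow>\<^sub>0 nat) \<Rightarrow> 'g::comm_monoid_add) \<Rightarrow> ('n, 'k::field) mpoly \<Rightarrow> 'g \<Rightarrow>\<^sub>0 'k" where
  "hmap d f = (\<Sum>u\<in>Poly_Mapping.keys f. Poly_Mapping.single (d u) (Poly_Mapping.lookup f u))"

lemma toric_ideal_tker: "toric_ideal A = tker (cfg_deg A)"
  unfolding toric_ideal_def tker_def by simp

lemma hmap_superset:
  assumes "finite S" "Poly_Mapping.keys f \<subseteq> S"
  shows "hmap d f = (\<Sum>u\<in>S. Poly_Mapping.single (d u) (Poly_Mapping.lookup f u))"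
  unfolding hmap_def
  by (rule sum.mono_neutral_left) (use assms in \<open>auto simp: in_keys_iff\<close>)

lemma lookup_hmap:
  "Poly_Mapping.lookup (hmap d f) w = (\<Sum>u\<in>{u \<in> Poly_Mapping.keys f. d u = w}. Poly_Mapping.lookup f u)"
  unfolding hmap_def lookup_sum lookup_single
  by (simp add: sum.inter_filter[symmetric] when_def eq_commute)

lemma tker_hmap: "f \<in> tker d \<longleftrightarrow> hmap d f = 0"
  unfolding tker_def
  by (auto simp: poly_mapping_eq_iff fun_eq_iff lookup_hmap)

lemma hmap_add: "hmap d (f + g) = hmap d f + hmap d g"
proof -
  let ?S = "Poly_Mapping.keys f \<union> Poly_Mapping.keys g"
  have "hmap d (f + g) = (\<Sum>u\<in>?S. Poly_Mapping.single (d u) (Poly_Mapping.lookup (f+g) u))"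
    by (rule hmap_superset) (use keys_add[of f g] in auto)
  also have "\<dots> = (\<Sum>u\<in>?S. Poly_Mapping.single (d u) (Poly_Mapping.lookup f u))
      + (\<Sum>u\<in>?S. Poly_Mapping.single (d u) (Poly_Mapping.lookup g u))"
    by (simp add: lookup_add single_add sum.distrib)
  also have "\<dots> = hmap d f + hmap d g"
    by (simp add: hmap_superset[of ?S f] hmap_superset[of ?S g])
  finally show ?thesis .
qed

lemma hmap_zero[simp]: "hmap d 0 = 0"
  by (simp add: hmap_def)

lemma hmap_uminus: "hmap d (- f) = - hmap d f"
proof -
  have "hmap d f + hmap d (-f) = 0" using hmap_add[of d f "-f"] by simp
  then show ?thesis by (metis minus_unique)
qed

lemma hmap_diff: "hmap d (f - g) = hmap d f - hmap d g"
  using hmap_add[of d f "-g"] hmap_uminus[of d g] by simp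

lemma hmap_sum: "hmap d (sum F S) = (\<Sum>s\<in>S. hmap d (F s))"
  by (induction S rule: infinite_finite_induct) (auto simp: hmap_add)

lemma hmap_single: "hmap d (Poly_Mapping.single a c) = Poly_Mapping.single (d a) c"
  by (simp add: hmap_def)

lemma sum_monomials: "(\<Sum>u\<in>Poly_Mapping.keys f. Poly_Mapping.single u (Poly_Mapping.lookup f u)) = f"
proof (rule poly_mapping_eqI)
  fix k
  show "Poly_Mapping.lookup (\<Sum>u\<in>Poly_Mapping.keys f. Poly_Mapping.single u (Poly_Mapping.lookup f u)) k
        = Poly_Mapping.lookup f k"
    unfolding lookup_sum lookup_single
    by (cases "k \<in> Poly_Mapping.keys f") (auto simp: when_def in_keys_iff)
qed

lemma hmap_mult:
  assumes add: "\<And>a b. d (a + b) = d a + d b"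
  shows "hmap d (f * g) = hmap d f * hmap d g"
proof -
  have "f * g = (\<Sum>u\<in>Poly_Mapping.keys f. Poly_Mapping.single u (Poly_Mapping.lookup f u)) *
       (\<Sum>v\<in>Poly_Mapping.keys g. Poly_Mapping.single v (Poly_Mapping.lookup g v))"
    by (simp add: sum_monomials)
  also have "\<dots> = (\<Sum>u\<in>Poly_Mapping.keys f. \<Sum>v\<in>Poly_Mapping.keys g.
       Poly_Mapping.single (u + v) (Poly_Mapping.lookup f u * Poly_Mapping.lookup g v))"
    by (simp add: sum_product mult_single)
  finally have "hmap d (f * g) = (\<Sum>u\<in>Poly_Mapping.keys f. \<Sum>v\<in>Poly_Mapping.keys g.
       Poly_Mapping.single (d u + d v) (Poly_Mapping.lookup f u * Poly_Mapping.lookup g v))"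
    by (simp add: hmap_sum hmap_single add)
  also have "\<dots> = hmap d f * hmap d g"
    unfolding hmap_def by (simp add: sum_product mult_single)
  finally show ?thesis .
qed

lemma hmap_one:
  assumes "d 0 = 0"
  shows "hmap d 1 = 1"
  using hmap_single[of d 0 1] assms by simp

lemma tker_add: "f \<in> tker d \<Longrightarrow> g \<in> tker d \<Longrightarrow> f + g \<in> tker d"
  by (simp add: tker_hmap hmap_add)

lemma tker_mult:
  assumes "\<And>a b. d (a + b) = d a + d b" "g \<in> tker d"
  shows "f * g \<in> tker d"
  using assms by (simp add: tker_hmap hmap_mult)

lemma tker_zero: "0 \<in> tker d"
  by (simp add: tker_hmap)

lemma cfg_deg_add: "cfg_deg A (a + b) = cfg_deg A a + cfg_deg A b"
  by (simp add: cfg_deg_def fun_eq_iff lookup_add distrib_right sum.distrib)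

lemma cfg_deg_zero: "cfg_deg A 0 = 0"
  by (simp add: cfg_deg_def fun_eq_iff)



lemma tker_refine:
  fixes d :: "('n \<Rightarrow>\<^sub>0 nat) \<Rightarrow> 'g::comm_monoid_add" and e :: "('n \<Rightarrow>\<^sub>0 nat) \<Rightarrow> 'h::comm_monoid_add"
  assumes de: "\<And>u v. d u = d v \<Longrightarrow> e u = e v"
  shows "(tker d :: ('n,'k::field) mpoly set) \<subseteq> tker e"
proof
  fix f :: "('n,'k) mpoly" assume f: "f \<in> tker d"
  show "f \<in> tker e" unfolding tker_def
  proof (intro CollectI allI)
    fix w
    let ?E = "{u \<in> Poly_Mapping.keys f. e u = w}"
    have fin: "finite ?E" by simp
    have "(\<Sum>u\<in>?E. Poly_Mapping.lookup f u) = (\<Sum>x\<in>d ` ?E. \<Sum>u\<in>{u\<in>?E. d u = x}. Poly_Mapping.lookup f u)"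
      by (rule sum.image_gen[OF fin])
    also have "\<dots> = 0"
    proof (rule sum.neutral, rule ballI)
      fix x assume "x \<in> d ` ?E"
      then obtain u0 where u0: "u0 \<in> ?E" "x = d u0" by auto
      have "{u\<in>?E. d u = x} = {u \<in> Poly_Mapping.keys f. d u = x}"
      proof (intro equalityI subsetI)
        fix u assume "u \<in> {u \<in> Poly_Mapping.keys f. d u = x}"
        then have "u \<in> Poly_Mapping.keys f" "d u = d u0" using u0 by auto
        then show "u \<in> {u\<in>?E. d u = x}" using de[of u u0] u0 by auto
      qed auto
      then show "(\<Sum>u\<in>{u\<in>?E. d u = x}. Poly_Mapping.lookup f u) = 0"
        using f by (simp add: tker_def)
    qed
    finally show "(\<Sum>u\<in>?E. Poly_Mapping.lookup f u) = 0" .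
  qed
qed

lemma tker_cong:
  fixes d :: "('n \<Rightarrow>\<^sub>0 nat) \<Rightarrow> 'g::comm_monoid_add" and e :: "('n \<Rightarrow>\<^sub>0 nat) \<Rightarrow> 'h::comm_monoid_add"
  assumes de: "\<And>u v. d u = d v \<longleftrightarrow> e u = e v"
  shows "(tker d :: ('n,'k::field) mpoly set) = tker e"
proof
  show "(tker d :: ('n,'k::field) mpoly set) \<subseteq> tker e" by (rule tker_refine) (use de in simp)
  show "(tker e :: ('n,'k::field) mpoly set) \<subseteq> tker d" by (rule tker_refine) (use de in simp)
qed

lemma binom_tker:
  fixes d :: "('n \<Rightarrow>\<^sub>0 nat) \<Rightarrow> 'g::comm_monoid_add"
  shows "((monom a - monom b :: ('n,'k::field) mpoly) \<in> tker d) \<longleftrightarrow> d a = d b"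
proof -
  have "hmap d (monom a - monom b :: ('n,'k) mpoly) = Poly_Mapping.single (d a) 1 - Poly_Mapping.single (d b) 1"
    by (simp add: monom_def hmap_diff hmap_single)
  moreover have "(Poly_Mapping.single (d a) (1::'k) - Poly_Mapping.single (d b) 1 = 0) \<longleftrightarrow> d a = d b"
  proof
    assume "Poly_Mapping.single (d a) (1::'k) - Poly_Mapping.single (d b) 1 = 0"
    then have "Poly_Mapping.single (d a) (1::'k) = Poly_Mapping.single (d b) 1" by simp
    then show "d a = d b" by (metis lookup_single_eq lookup_single_not_eq one_neq_zero)
  qed simp
  ultimately show ?thesis by (simp add: tker_hmap)
qed

lemma hmap_power:
  fixes d :: "('n \<Rightarrow>\<^sub>0 nat) \<Rightarrow> 'g::comm_monoid_add"
  assumes add: "\<And>a b. d (a + b) = d a + d b" and z: "d 0 = 0"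
  shows "hmap d ((f::('n,'k::field) mpoly) ^ k) = hmap d f ^ k"
  by (induction k) (simp_all add: hmap_one[of d, OF z] hmap_mult[OF add])

lemma tker_radical:
  fixes d :: "('n \<Rightarrow>\<^sub>0 nat) \<Rightarrow> (nat \<Rightarrow>\<^sub>0 int)"
  assumes add: "\<And>a b. d (a + b) = d a + d b"
  assumes "(f::('n,'k::field) mpoly) ^ k \<in> tker d"
  shows "f \<in> tker d"
proof -
  have z: "d 0 = 0" using add[of 0 0] by simp
  have "hmap d f ^ k = 0" using assms(2) by (simp add: tker_hmap hmap_power[OF add z])
  then show ?thesis by (simp add: tker_hmap)
qed



definition lin :: "('n::finite \<Rightarrow> int) \<Rightarrow> ('n \<Rightarrow>\<^sub>0 nat) \<Rightarrow> int" where
  "lin c u = (\<Sum>i\<in>UNIV. int (Poly_Mapping.lookup u i) * c i)"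

lemma cfg_bounded_fin:
  fixes B :: "'n::finite \<Rightarrow> nat \<Rightarrow> int"
  assumes "\<forall>i j. m \<le> j \<longrightarrow> B i j = 0"
  shows "finite {j. cfg_deg B u j \<noteq> 0}"
proof -
  have "{j. cfg_deg B u j \<noteq> 0} \<subseteq> {..<m}"
  proof
    fix j assume "j \<in> {j. cfg_deg B u j \<noteq> 0}"
    then show "j \<in> {..<m}" using assms by (cases "m \<le> j") (auto simp: cfg_deg_def)
  qed
  then show ?thesis using finite_subset by blast
qed

lemma radical_bounded:
  fixes B :: "'n::finite \<Rightarrow> nat \<Rightarrow> int"
  assumes bd: "\<forall>i j. m \<le> j \<longrightarrow> B i j = 0"
  assumes "(f::('n,'k::field) mpoly) ^ k \<in> toric_ideal B"
  shows "f \<in> toric_ideal B"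
proof -
  define d where "d u = Abs_poly_mapping (cfg_deg B u)" for u
  have lk: "Poly_Mapping.lookup (d u) = cfg_deg B u" for u
    unfolding d_def using cfg_bounded_fin[OF bd] by (simp add: Abs_poly_mapping_inverse)
  have add: "d (a + b) = d a + d b" for a b
    by (rule poly_mapping_eqI) (simp add: lk lookup_add cfg_deg_add)
  have eq: "d u = d v \<longleftrightarrow> cfg_deg B u = cfg_deg B v" for u v
    by (metis lk poly_mapping_eqI)
  have T: "toric_ideal B = (tker d :: ('n,'k) mpoly set)"
    unfolding toric_ideal_tker by (rule tker_cong) (simp add: eq)
  show ?thesis using assms(2) unfolding T by (rule tker_radical[OF add])
qed

lemma exists_ext:
  fixes A :: "'n::finite \<Rightarrow> 'm::finite \<Rightarrow> int" and c :: "'n \<Rightarrow> int"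
  shows "\<exists>(A'::'n \<Rightarrow> nat \<Rightarrow> int) m. (\<forall>i j. m \<le> j \<longrightarrow> A' i j = 0) \<and>
     (\<forall>u v. cfg_deg A' u = cfg_deg A' v \<longleftrightarrow> cfg_deg A u = cfg_deg A v \<and> lin c u = lin c v)"
proof -
  obtain f0 :: "'m \<Rightarrow> nat" and N where f0: "f0 ` UNIV = {i. i < N}" "inj f0"
    using finite_imp_inj_to_nat_seg[of "UNIV::'m set"] by auto
  define h where "h = inv f0"
  have hf: "h (f0 x) = x" for x unfolding h_def using f0(2) by simp
  have fl: "f0 x < N" for x using f0(1) by auto
  define A' where "A' i j = (if j < N then A i (h j) else if j = N then c i else 0)" for i j
  have bd: "\<forall>i j. Suc N \<le> j \<longrightarrow> A' i j = 0" by (auto simp: A'_def)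
  have c1: "cfg_deg A' u (f0 x) = cfg_deg A u x" for u x
    by (simp add: cfg_deg_def A'_def fl hf)
  have c2: "cfg_deg A' u N = lin c u" for u
    by (simp add: cfg_deg_def A'_def lin_def)
  have c3: "j < N \<Longrightarrow> cfg_deg A' u j = cfg_deg A u (h j)" for u j
  proof -
    assume "j < N"
    then obtain x where "j = f0 x" using f0(1) by (metis (mono_tags) imageE mem_Collect_eq)
    then show ?thesis by (simp add: c1 hf)
  qed
  have c4: "N < j \<Longrightarrow> cfg_deg A' u j = 0" for u j
    by (simp add: cfg_deg_def A'_def)
  have "cfg_deg A' u = cfg_deg A' v \<longleftrightarrow> cfg_deg A u = cfg_deg A v \<and> lin c u = lin c v" for u v
  proof
    assume "cfg_deg A' u = cfg_deg A' v"
    then show "cfg_deg A u = cfg_deg A v \<and> lin c u = lin c v"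
      by (metis c1 c2 ext)
  next
    assume H: "cfg_deg A u = cfg_deg A v \<and> lin c u = lin c v"
    show "cfg_deg A' u = cfg_deg A' v"
    proof
      fix j
      consider "j < N" | "j = N" | "N < j" by linarith
      then show "cfg_deg A' u j = cfg_deg A' v j"
        by cases (use H c2 c3 c4 in auto)
    qed
  qed
  then show ?thesis using bd by blast
qed

lemma radical_toric:
  fixes A :: "'n::finite \<Rightarrow> 'm::finite \<Rightarrow> int"
  assumes "(f::('n,'k::field) mpoly) ^ k \<in> toric_ideal A"
  shows "f \<in> toric_ideal A"
proof -
  obtain A' :: "'n \<Rightarrow> nat \<Rightarrow> int" and m where A': "\<forall>i j. m \<le> j \<longrightarrow> A' i j = 0"
     "\<forall>u v. cfg_deg A' u = cfg_deg A' v \<longleftrightarrow> cfg_deg A u = cfg_deg A v \<and> lin (\<lambda>_. 0) u = lin (\<lambda>_. 0) v"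
    using exists_ext[of A "\<lambda>_. 0"] by blast
  have T: "toric_ideal A = (toric_ideal A' :: ('n,'k) mpoly set)"
    unfolding toric_ideal_tker by (rule tker_cong) (use A'(2) in \<open>simp add: lin_def\<close>)
  show ?thesis using radical_bounded[OF A'(1)] assms unfolding T by blast
qed



lemma mono_subseq_nat:
  fixes s :: "nat \<Rightarrow> nat"
  shows "\<exists>\<phi>::nat\<Rightarrow>nat. strict_mono \<phi> \<and> (\<forall>k l. k \<le> l \<longrightarrow> s (\<phi> k) \<le> s (\<phi> l))"
proof -
  obtain \<phi> :: "nat \<Rightarrow> nat" where \<phi>: "strict_mono \<phi>" "monoseq (\<lambda>n. s (\<phi> n))"
    using seq_monosub[of s] by blast
  from \<phi>(2) consider (inc) "\<forall>m. \<forall>n\<ge>m. s (\<phi> m) \<le> s (\<phi> n)" | (dec) "\<forall>m. \<forall>n\<ge>m. s (\<phi> n) \<le> s (\<phi> m)"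
    unfolding monoseq_def by fast
  then show ?thesis
  proof cases
    case inc then show ?thesis using \<phi>(1) by (intro exI[of _ \<phi>] conjI) auto
  next
    case dec
    obtain N where N: "\<And>y. s (\<phi> N) \<le> s (\<phi> y)"
      using ex_has_least_nat[of "\<lambda>_. True" 0 "\<lambda>n. s (\<phi> n)"] by auto
    define \<psi> where "\<psi> k = \<phi> (k + N)" for k
    have "strict_mono \<psi>" using \<phi>(1) unfolding \<psi>_def strict_mono_def by simp
    moreover have "s (\<psi> k) \<le> s (\<psi> l)" if "k \<le> l" for k l
    proof -
      have "s (\<phi> (k + N)) \<le> s (\<phi> N)" using dec le_add2 by blast
      also have "\<dots> \<le> s (\<phi> (l + N))" using N by simp
      finally show ?thesis unfolding \<psi>_def .
    qed
    ultimately show ?thesis by (intro exI[of _ \<psi>] conjI) auto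
  qed
qed
lemma mono_subseq_fin:
  fixes s :: "nat \<Rightarrow> 'a \<Rightarrow> nat"
  assumes "finite C"
  shows "\<exists>\<phi>::nat\<Rightarrow>nat. strict_mono \<phi> \<and> (\<forall>i\<in>C. \<forall>k l. k \<le> l \<longrightarrow> (s (\<phi> k) i :: nat) \<le> s (\<phi> l) i)"
  using assms
proof (induction C rule: finite_induct)
  case empty
  show ?case by (rule exI[where x=id]) (simp add: strict_mono_def)
next
  case (insert x C)
  then obtain \<phi> :: "nat \<Rightarrow> nat" where \<phi>: "strict_mono \<phi>" "\<forall>i\<in>C. \<forall>k l. k \<le> l \<longrightarrow> s (\<phi> k) i \<le> s (\<phi> l) i"
    by blast
  obtain \<psi> :: "nat \<Rightarrow> nat" where \<psi>: "strict_mono \<psi>" "\<forall>k l. k \<le> l \<longrightarrow> s (\<phi> (\<psi> k)) x \<le> s (\<phi> (\<psi> l)) x"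
    using mono_subseq_nat[of "\<lambda>k. s (\<phi> k) x"] by blast
  have sm: "strict_mono (\<phi> \<circ> \<psi>)" using \<phi>(1) \<psi>(1) by (simp add: strict_mono_def)
  have "\<forall>i\<in>insert x C. \<forall>k l. k \<le> l \<longrightarrow> s ((\<phi> \<circ> \<psi>) k) i \<le> s ((\<phi> \<circ> \<psi>) l) i"
  proof (intro ballI allI impI)
    fix i k l assume i: "i \<in> insert x C" and kl: "(k::nat) \<le> l"
    show "s ((\<phi> \<circ> \<psi>) k) i \<le> s ((\<phi> \<circ> \<psi>) l) i"
    proof (cases "i = x")
      case True then show ?thesis using \<psi>(2) kl by simp
    next
      case False
      then have "i \<in> C" using i by simp
      moreover have "\<psi> k \<le> \<psi> l" using \<psi>(1) kl by (simp add: strict_mono_less_eq)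
      ultimately show ?thesis using \<phi>(2) by simp
    qed
  qed
  then show ?case using sm by blast
qed

definition pleq :: "('n \<Rightarrow>\<^sub>0 nat) \<times> ('n \<Rightarrow>\<^sub>0 nat) \<Rightarrow> ('n \<Rightarrow>\<^sub>0 nat) \<times> ('n \<Rightarrow>\<^sub>0 nat) \<Rightarrow> bool" where
  "pleq p q \<longleftrightarrow> (\<forall>i. Poly_Mapping.lookup (fst p) i \<le> Poly_Mapping.lookup (fst q) i \<and>
                      Poly_Mapping.lookup (snd p) i \<le> Poly_Mapping.lookup (snd q) i)"

lemma dickson_pairs:
  fixes p :: "nat \<Rightarrow> ('n::finite \<Rightarrow>\<^sub>0 nat) \<times> ('n \<Rightarrow>\<^sub>0 nat)"
  shows "\<exists>i j. i < j \<and> pleq (p i) (p j)"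
proof -
  define s where "s k x = (case x of Inl i \<Rightarrow> Poly_Mapping.lookup (fst (p k)) i
                                  | Inr i \<Rightarrow> Poly_Mapping.lookup (snd (p k)) i)" for k and x :: "'n + 'n"
  obtain \<phi> :: "nat \<Rightarrow> nat" where \<phi>: "strict_mono \<phi>" "\<forall>x\<in>UNIV. \<forall>k l. k \<le> l \<longrightarrow> s (\<phi> k) x \<le> s (\<phi> l) x"
    using mono_subseq_fin[of "UNIV :: ('n + 'n) set" s] by auto
  have "pleq (p (\<phi> 0)) (p (\<phi> 1))"
    unfolding pleq_def
  proof
    fix i
    show "Poly_Mapping.lookup (fst (p (\<phi> 0))) i \<le> Poly_Mapping.lookup (fst (p (\<phi> 1))) i \<and>
          Poly_Mapping.lookup (snd (p (\<phi> 0))) i \<le> Poly_Mapping.lookup (snd (p (\<phi> 1))) i"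
      using \<phi>(2)[rule_format, of "Inl i" 0 1] \<phi>(2)[rule_format, of "Inr i" 0 1] by (simp add: s_def)
  qed
  moreover have "\<phi> 0 < \<phi> 1" using \<phi>(1) by (simp add: strict_mono_def)
  ultimately show ?thesis by blast
qed

definition psize :: "('n::finite \<Rightarrow>\<^sub>0 nat) \<times> ('n \<Rightarrow>\<^sub>0 nat) \<Rightarrow> nat" where
  "psize p = (\<Sum>i\<in>UNIV. Poly_Mapping.lookup (fst p) i + Poly_Mapping.lookup (snd p) i)"

lemma pleq_psize:
  assumes "pleq p q" "p \<noteq> q"
  shows "psize p < psize q"
proof -
  obtain u v u' v' where pq: "p = (u,v)" "q = (u',v')" by (cases p, cases q) auto
  have le: "\<And>i. Poly_Mapping.lookup u i \<le> Poly_Mapping.lookup u' i \<and> Poly_Mapping.lookup v i \<le> Poly_Mapping.lookup v' i"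
    using assms(1) pq by (simp add: pleq_def)
  have "\<exists>i. Poly_Mapping.lookup u i \<noteq> Poly_Mapping.lookup u' i \<or> Poly_Mapping.lookup v i \<noteq> Poly_Mapping.lookup v' i"
  proof (rule ccontr)
    assume "\<not> ?thesis"
    then have "u = u'" "v = v'" by (auto intro!: poly_mapping_eqI)
    then show False using assms(2) pq by simp
  qed
  then obtain i where "Poly_Mapping.lookup u i \<noteq> Poly_Mapping.lookup u' i \<or> Poly_Mapping.lookup v i \<noteq> Poly_Mapping.lookup v' i"
    by blast
  then have i: "Poly_Mapping.lookup u i + Poly_Mapping.lookup v i < Poly_Mapping.lookup u' i + Poly_Mapping.lookup v' i"
    using le[of i] by linarith
  have le2: "\<forall>j\<in>UNIV. Poly_Mapping.lookup u j + Poly_Mapping.lookup v j \<le> Poly_Mapping.lookup u' j + Poly_Mapping.lookup v' j"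
    using le by (simp add: add_mono)
  show ?thesis unfolding psize_def pq fst_conv snd_conv
    by (rule sum_strict_mono_ex1[OF finite_UNIV le2]) (use i in blast)
qed

lemma pleq_trans: "pleq p q \<Longrightarrow> pleq q r \<Longrightarrow> pleq p r"
  unfolding pleq_def by (meson le_trans)

lemma pleq_refl: "pleq p p"
  unfolding pleq_def by simp

lemma exists_min_below:
  fixes P :: "(('n::finite \<Rightarrow>\<^sub>0 nat) \<times> ('n \<Rightarrow>\<^sub>0 nat)) set"
  assumes "p \<in> P"
  shows "\<exists>q\<in>{q\<in>P. \<forall>r\<in>P. pleq r q \<longrightarrow> r = q}. pleq q p"
  using assms
proof (induction "psize p" arbitrary: p rule: less_induct)
  case less
  show ?case
  proof (cases "\<forall>r\<in>P. pleq r p \<longrightarrow> r = p")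
    case True then show ?thesis using less.prems pleq_refl by blast
  next
    case False
    then obtain r where r: "r \<in> P" "pleq r p" "r \<noteq> p" by blast
    then have "psize r < psize p" by (rule_tac pleq_psize) auto
    with less.hyps r(1) obtain q where "q\<in>{q\<in>P. \<forall>r\<in>P. pleq r q \<longrightarrow> r = q}" "pleq q r" by blast
    then show ?thesis using r(2) pleq_trans by blast
  qed
qed

lemma finite_mins:
  fixes P :: "(('n::finite \<Rightarrow>\<^sub>0 nat) \<times> ('n \<Rightarrow>\<^sub>0 nat)) set"
  shows "finite {q\<in>P. \<forall>r\<in>P. pleq r q \<longrightarrow> r = q}"
proof (rule ccontr)
  let ?M = "{q\<in>P. \<forall>r\<in>P. pleq r q \<longrightarrow> r = q}"
  assume "infinite ?M"
  then obtain p :: "nat \<Rightarrow> _" where p: "inj p" "range p \<subseteq> ?M"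
    using infinite_countable_subset by blast
  obtain i j where ij: "i < j" "pleq (p i) (p j)" using dickson_pairs[of p] by blast
  have "p i \<in> P" "p j \<in> ?M" using p(2) by auto
  then have "p i = p j" using ij(2) by blast
  then have "i = j" using p(1) by (simp add: inj_def)
  then show False using ij(1) by simp
qed



lemma gen_ideal_zero: "0 \<in> gen_ideal S"
  unfolding gen_ideal_def by (rule CollectI, rule exI[of _ "{}"]) simp

lemma gen_ideal_base: "s \<in> S \<Longrightarrow> s \<in> gen_ideal S"
  unfolding gen_ideal_def by (rule CollectI, rule exI[of _ "{s}"], rule exI[of _ "\<lambda>_. 1"]) simp

lemma gen_ideal_add:
  assumes "f \<in> gen_ideal S" "g \<in> gen_ideal S"
  shows "f + g \<in> gen_ideal S"
proof -
  obtain F1 c1 where 1: "finite F1" "F1 \<subseteq> S" "f = (\<Sum>s\<in>F1. c1 s * s)"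
    using assms(1) unfolding gen_ideal_def by blast
  obtain F2 c2 where 2: "finite F2" "F2 \<subseteq> S" "g = (\<Sum>s\<in>F2. c2 s * s)"
    using assms(2) unfolding gen_ideal_def by blast
  define c where "c s = (if s \<in> F1 then c1 s else 0) + (if s \<in> F2 then c2 s else 0)" for s
  have fin: "finite (F1 \<union> F2)" using 1 2 by simp
  have "(\<Sum>s\<in>F1 \<union> F2. c s * s) = (\<Sum>s\<in>F1 \<union> F2. (if s \<in> F1 then c1 s * s else 0))
      + (\<Sum>s\<in>F1 \<union> F2. (if s \<in> F2 then c2 s * s else 0))"
    unfolding c_def by (subst sum.distrib[symmetric], rule sum.cong) (auto simp: distrib_right)
  also have "\<dots> = f + g"
    using fin 1 2 by (simp add: sum.If_cases Int_absorb1 Int_absorb2 Int_commute)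
  finally have eq: "f + g = (\<Sum>s\<in>F1 \<union> F2. c s * s)" by simp
  show ?thesis unfolding gen_ideal_def
    by (rule CollectI, rule exI[of _ "F1 \<union> F2"], rule exI[of _ c]) (use fin 1 2 eq in auto)
qed

lemma gen_ideal_mult:
  assumes "f \<in> gen_ideal S"
  shows "a * f \<in> gen_ideal S"
proof -
  obtain F c where 1: "finite F" "F \<subseteq> S" "f = (\<Sum>s\<in>F. c s * s)"
    using assms unfolding gen_ideal_def by blast
  have "a * f = (\<Sum>s\<in>F. (a * c s) * s)" using 1 by (simp add: sum_distrib_left mult.assoc)
  then show ?thesis unfolding gen_ideal_def
    by (rule_tac CollectI, rule_tac exI[of _ F], rule_tac exI[of _ "\<lambda>s. a * c s"]) (use 1 in auto)
qed

lemma gen_ideal_sum: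
  assumes "\<And>i. i \<in> I \<Longrightarrow> F i \<in> gen_ideal S"
  shows "sum F I \<in> gen_ideal S"
  using assms
  by (induction I rule: infinite_finite_induct) (auto intro: gen_ideal_add gen_ideal_zero)

lemma gen_ideal_least:
  assumes "S \<subseteq> T" "0 \<in> T" "\<And>x y. x \<in> T \<Longrightarrow> y \<in> T \<Longrightarrow> x + y \<in> T"
    "\<And>a x. x \<in> T \<Longrightarrow> a * x \<in> T"
  shows "gen_ideal S \<subseteq> T"
proof
  fix f assume "f \<in> gen_ideal S"
  then obtain F c where 1: "finite F" "F \<subseteq> S" "f = (\<Sum>s\<in>F. c s * s)"
    unfolding gen_ideal_def by blast
  have "(\<Sum>s\<in>F. c s * s) \<in> T" using 1(1,2)
  proof (induction F rule: finite_induct)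
    case empty then show ?case using assms(2) by simp
  next
    case (insert x F)
    then show ?case using assms by auto
  qed
  then show "f \<in> T" using 1 by simp
qed

lemma monom_add: "(monom (a + b) :: ('n,'k::field) mpoly) = monom a * monom b"
  by (simp add: monom_def mult_single)

definition Pset :: "('n::finite \<Rightarrow> 'c \<Rightarrow> int) \<Rightarrow> (('n \<Rightarrow>\<^sub>0 nat) \<times> ('n \<Rightarrow>\<^sub>0 nat)) set" where
  "Pset A = {p. cfg_deg A (fst p) = cfg_deg A (snd p) \<and> fst p \<noteq> snd p}"

definition Mins :: "('n::finite \<Rightarrow> 'c \<Rightarrow> int) \<Rightarrow> (('n \<Rightarrow>\<^sub>0 nat) \<times> ('n \<Rightarrow>\<^sub>0 nat)) set" where
  "Mins A = {q\<in>Pset A. \<forall>r\<in>Pset A. pleq r q \<longrightarrow> r = q}"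

definition binom :: "('n \<Rightarrow>\<^sub>0 nat) \<times> ('n \<Rightarrow>\<^sub>0 nat) \<Rightarrow> ('n,'k::field) mpoly" where
  "binom p = monom (fst p) - monom (snd p)"

lemma finite_Mins: "finite (Mins A)"
  unfolding Mins_def by (rule finite_mins)

lemma binom_in_gen:
  fixes A :: "'n::finite \<Rightarrow> 'c \<Rightarrow> int"
  assumes "cfg_deg A u = cfg_deg A v"
  shows "(monom u - monom v :: ('n,'k::field) mpoly) \<in> gen_ideal (binom ` Mins A)"
  using assms
proof (induction "psize (u,v)" arbitrary: u v rule: less_induct)
  case less
  show ?case
  proof (cases "u = v")
    case True then show ?thesis using gen_ideal_zero by simp
  next
    case False
    then have "(u,v) \<in> Pset A" using less.prems by (simp add: Pset_def)
    then obtain q where q: "q \<in> Mins A" "pleq q (u,v)"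
      using exists_min_below[of "(u,v)" "Pset A"] unfolding Mins_def by blast
    obtain u' v' where q': "q = (u',v')" by (cases q)
    have qP: "cfg_deg A u' = cfg_deg A v'" "u' \<noteq> v'" using q(1) q' by (auto simp: Mins_def Pset_def)
    have le: "Poly_Mapping.lookup u' i \<le> Poly_Mapping.lookup u i" "Poly_Mapping.lookup v' i \<le> Poly_Mapping.lookup v i" for i
      using q(2) q' by (auto simp: pleq_def)
    define u'' where "u'' = u - u'"
    define v'' where "v'' = v - v'"
    have uu: "u = u' + u''" unfolding u''_def
      by (rule poly_mapping_eqI) (simp add: lookup_add lookup_minus le)
    have vv: "v = v' + v''" unfolding v''_def
      by (rule poly_mapping_eqI) (simp add: lookup_add lookup_minus le)
    have deg: "cfg_deg A u'' = cfg_deg A v''"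
      using less.prems qP(1) uu vv cfg_deg_add[of A u' u''] cfg_deg_add[of A v' v''] by simp
    have "pleq (u'',v'') (u,v)" unfolding pleq_def u''_def v''_def by (simp add: lookup_minus)
    moreover have "(u'',v'') \<noteq> (u,v)"
    proof
      assume "(u'',v'') = (u,v)"
      then have "u' = 0" "v' = 0" using uu vv
        by (metis add_cancel_right_left prod.inject)+
      then show False using qP(2) by simp
    qed
    ultimately have "psize (u'',v'') < psize (u,v)" by (rule pleq_psize)
    then have IH: "(monom u'' - monom v'' :: ('n,'k) mpoly) \<in> gen_ideal (binom ` Mins A)"
      using less.hyps deg by blast
    have B: "(monom u' - monom v' :: ('n,'k) mpoly) \<in> gen_ideal (binom ` Mins A)"
      using q(1) q' by (intro gen_ideal_base) (force simp: binom_def)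
    have "(monom u - monom v :: ('n,'k) mpoly) = monom u'' * (monom u' - monom v') + monom v' * (monom u'' - monom v'')"
      unfolding uu vv monom_add by (simp add: algebra_simps)
    then show ?thesis using IH B by (simp add: gen_ideal_add gen_ideal_mult)
  qed
qed



lemma single_sum: "Poly_Mapping.single r (sum g S) = (\<Sum>u\<in>S. Poly_Mapping.single r (g u))"
  by (induction S rule: infinite_finite_induct) (simp_all add: single_add)

lemma toric_ideal_ideal:
  fixes A :: "'n::finite \<Rightarrow> 'c \<Rightarrow> int"
  shows "0 \<in> (toric_ideal A :: ('n,'k::field) mpoly set)"
    "x \<in> toric_ideal A \<Longrightarrow> y \<in> toric_ideal A \<Longrightarrow> x + y \<in> toric_ideal A"
    "x \<in> toric_ideal A \<Longrightarrow> a * x \<in> toric_ideal A"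
  unfolding toric_ideal_tker
  by (simp_all add: tker_zero tker_add tker_mult cfg_deg_add)

lemma binom_toric:
  fixes A :: "'n::finite \<Rightarrow> 'c \<Rightarrow> int"
  shows "((monom a - monom b :: ('n,'k::field) mpoly) \<in> toric_ideal A) \<longleftrightarrow> cfg_deg A a = cfg_deg A b"
  unfolding toric_ideal_tker by (rule binom_tker)

lemma toric_in_gen:
  fixes A :: "'n::finite \<Rightarrow> 'c \<Rightarrow> int"
  assumes f: "(f :: ('n,'k::field) mpoly) \<in> toric_ideal A"
  shows "f \<in> gen_ideal (binom ` Mins A)"
proof -
  let ?K = "Poly_Mapping.keys f"
  define R where "R w = (SOME v. v \<in> ?K \<and> cfg_deg A v = w)" for w
  define rep where "rep u = R (cfg_deg A u)" for u
  have rp: "rep u \<in> ?K \<and> cfg_deg A (rep u) = cfg_deg A u" if "u \<in> ?K" for u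
    unfolding rep_def R_def by (rule someI_ex) (use that in blast)
  have req: "rep u = rep u0 \<longleftrightarrow> cfg_deg A u = cfg_deg A u0" if "u \<in> ?K" "u0 \<in> ?K" for u u0
    using rp[OF that(1)] rp[OF that(2)] unfolding rep_def by metis
  have sm: "Poly_Mapping.single u c = Poly_Mapping.single 0 c * (monom u :: ('n,'k) mpoly)" for u and c :: 'k
    by (simp add: monom_def mult_single)
  have "f = (\<Sum>u\<in>?K. Poly_Mapping.single u (Poly_Mapping.lookup f u))"
    by (simp add: sum_monomials)
  also have "\<dots> = (\<Sum>u\<in>?K. Poly_Mapping.single 0 (Poly_Mapping.lookup f u) * (monom u - monom (rep u)))
      + (\<Sum>u\<in>?K. Poly_Mapping.single (rep u) (Poly_Mapping.lookup f u))"
    unfolding sum.distrib[symmetric]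
    by (rule sum.cong) (simp_all add: right_diff_distrib monom_def mult_single)
  also have "(\<Sum>u\<in>?K. Poly_Mapping.single (rep u) (Poly_Mapping.lookup f u)) = 0"
  proof -
    have "(\<Sum>u\<in>?K. Poly_Mapping.single (rep u) (Poly_Mapping.lookup f u))
        = (\<Sum>r\<in>rep ` ?K. \<Sum>u\<in>{u\<in>?K. rep u = r}. Poly_Mapping.single (rep u) (Poly_Mapping.lookup f u))"
      by (rule sum.image_gen) simp
    also have "\<dots> = 0"
    proof (rule sum.neutral, rule ballI)
      fix r assume "r \<in> rep ` ?K"
      then obtain u0 where u0: "u0 \<in> ?K" "r = rep u0" by blast
      have S: "{u\<in>?K. rep u = r} = {u\<in>?K. cfg_deg A u = cfg_deg A u0}"
        using req u0 by blast
      have "(\<Sum>u\<in>{u\<in>?K. rep u = r}. Poly_Mapping.single (rep u) (Poly_Mapping.lookup f u))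
          = (\<Sum>u\<in>{u\<in>?K. rep u = r}. Poly_Mapping.single r (Poly_Mapping.lookup f u))"
        by (rule sum.cong) auto
      also have "\<dots> = Poly_Mapping.single r (\<Sum>u\<in>{u\<in>?K. cfg_deg A u = cfg_deg A u0}. Poly_Mapping.lookup f u)"
        by (simp add: single_sum S)
      also have "\<dots> = 0" using f by (simp add: toric_ideal_def)
      finally show "(\<Sum>u\<in>{u\<in>?K. rep u = r}. Poly_Mapping.single (rep u) (Poly_Mapping.lookup f u)) = 0" .
    qed
    finally show ?thesis .
  qed
  finally have feq: "f = (\<Sum>u\<in>?K. Poly_Mapping.single 0 (Poly_Mapping.lookup f u) * (monom u - monom (rep u)))"
    by simp
  have G: "(monom u - monom (rep u) :: ('n,'k) mpoly) \<in> gen_ideal (binom ` Mins A)" if "u \<in> ?K" for u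
  proof -
    have "cfg_deg A u = cfg_deg A (rep u)" using rp[OF that] by simp
    then show ?thesis by (rule binom_in_gen)
  qed
  have "(\<Sum>u\<in>?K. Poly_Mapping.single 0 (Poly_Mapping.lookup f u) * (monom u - monom (rep u))) \<in> gen_ideal (binom ` Mins A)"
    by (rule gen_ideal_sum, rule gen_ideal_mult, erule G)
  then show ?thesis using feq by simp
qed

lemma exists_Bs:
  fixes A :: "'n::finite \<Rightarrow> 'm::finite \<Rightarrow> int"
  shows "\<exists>Bs. (\<forall>B\<in>set Bs. is_binomial B \<and> B \<in> (toric_ideal A :: ('n,'k::field) mpoly set))
             \<and> toric_ideal A = rad (gen_ideal (set Bs))"
proof -
  have "finite (binom ` Mins A :: ('n,'k) mpoly set)" using finite_Mins by blast
  then obtain Bs where Bs: "set Bs = (binom ` Mins A :: ('n,'k) mpoly set)"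
    by (meson finite_list)
  have inI: "binom p \<in> (toric_ideal A :: ('n,'k) mpoly set)" if "p \<in> Mins A" for p
    unfolding binom_def binom_toric using that by (simp add: Mins_def Pset_def)
  have isb: "is_binomial (binom p :: ('n,'k) mpoly)" for p
    unfolding is_binomial_def binom_def by blast
  have sub: "gen_ideal (set Bs) \<subseteq> (toric_ideal A :: ('n,'k) mpoly set)"
  proof (rule gen_ideal_least)
    show "set Bs \<subseteq> toric_ideal A" unfolding Bs by (rule image_subsetI, rule inI)
    show "0 \<in> (toric_ideal A :: ('n,'k) mpoly set)" by (rule toric_ideal_ideal(1))
    show "x + y \<in> toric_ideal A" if "x \<in> toric_ideal A" "y \<in> toric_ideal A" for x y :: "('n,'k) mpoly"
      using that by (rule toric_ideal_ideal(2))
    show "a * x \<in> toric_ideal A" if "x \<in> toric_ideal A" for a x :: "('n,'k) mpoly"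
      using that by (rule toric_ideal_ideal(3))
  qed
  have "toric_ideal A = rad (gen_ideal (set Bs))"
  proof
    show "toric_ideal A \<subseteq> rad (gen_ideal (set Bs))"
    proof
      fix f assume "f \<in> (toric_ideal A :: ('n,'k) mpoly set)"
      then have "f ^ 1 \<in> gen_ideal (set Bs)" using toric_in_gen Bs by simp
      then show "f \<in> rad (gen_ideal (set Bs))" unfolding rad_def by blast
    qed
    show "rad (gen_ideal (set Bs)) \<subseteq> toric_ideal A"
    proof
      fix f assume "f \<in> rad (gen_ideal (set Bs))"
      then obtain k where "f ^ k \<in> gen_ideal (set Bs)" unfolding rad_def by blast
      then have "f ^ k \<in> toric_ideal A" using sub by blast
      then show "f \<in> toric_ideal A" by (rule radical_toric)
    qed
  qed
  moreover have "\<forall>B\<in>set Bs. is_binomial B \<and> B \<in> toric_ideal A" using Bs inI isb by auto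
  ultimately show ?thesis by blast
qed



abbreviation qsc :: "rat \<Rightarrow> ('n \<Rightarrow> rat) \<Rightarrow> ('n \<Rightarrow> rat)" where
  "qsc \<equiv> (\<lambda>(c::rat) (x::'n\<Rightarrow>rat) i. c * x i)"

lemma vs_q: "vector_space (qsc :: rat \<Rightarrow> ('n \<Rightarrow> rat) \<Rightarrow> ('n \<Rightarrow> rat))"
  by unfold_locales (simp_all add: fun_eq_iff algebra_simps)

lemma vs_rat: "vector_space ((*) :: rat \<Rightarrow> rat \<Rightarrow> rat)"
  by unfold_locales (simp_all add: algebra_simps)

lemma fun_sum_apply: "(sum F S :: 'a \<Rightarrow> 'b::comm_monoid_add) j = (\<Sum>s\<in>S. F s j)"
  by (induction S rule: infinite_finite_induct) simp_all

lemma separate_functional: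
  fixes U :: "('n::finite \<Rightarrow> rat) set"
  assumes x: "x \<notin> module.span qsc U"
  shows "\<exists>c :: 'n \<Rightarrow> rat. (\<forall>u\<in>U. (\<Sum>i\<in>UNIV. c i * u i) = 0) \<and> (\<Sum>i\<in>UNIV. c i * x i) \<noteq> 0"
proof -
  interpret V: vector_space "qsc :: rat \<Rightarrow> ('n \<Rightarrow> rat) \<Rightarrow> ('n \<Rightarrow> rat)" by (rule vs_q)
  interpret VP: vector_space_pair "qsc :: rat \<Rightarrow> ('n \<Rightarrow> rat) \<Rightarrow> ('n \<Rightarrow> rat)" "(*) :: rat \<Rightarrow> rat \<Rightarrow> rat"
    by (intro vector_space_pair.intro vs_q vs_rat)
  obtain B where B: "B \<subseteq> U" "V.independent B" "U \<subseteq> V.span B"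
    using V.maximal_independent_subset[of U] by blast
  have xB: "x \<notin> V.span B" using x B(1) V.span_mono by blast
  then have xnB: "x \<notin> B" using V.span_base by blast
  have ind: "V.independent (insert x B)" using V.independent_insertI[OF xB B(2)] .
  define f where "f = VP.construct (insert x B) (\<lambda>y. if y = x then (1::rat) else 0)"
  have lin: "Vector_Spaces.linear qsc (*) f" unfolding f_def by (rule VP.linear_construct[OF ind])
  interpret L: Vector_Spaces.linear "qsc :: rat \<Rightarrow> ('n \<Rightarrow> rat) \<Rightarrow> ('n \<Rightarrow> rat)" "(*) :: rat \<Rightarrow> rat \<Rightarrow> rat" f
    by (rule lin)
  have fx: "f x = 1" unfolding f_def by (subst VP.construct_basis[OF ind]) auto
  have fB: "f b = 0" if "b \<in> B" for b
    unfolding f_def using that xnB by (subst VP.construct_basis[OF ind]) auto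
  have fU: "f u = 0" if "u \<in> U" for u
    using L.eq_0_on_span[of B u] fB B(3) that by blast
  define e where "e i = (\<lambda>j. if j = i then (1::rat) else 0)" for i :: 'n
  define c where "c i = f (e i)" for i
  have rep: "f y = (\<Sum>i\<in>UNIV. c i * y i)" for y
  proof -
    have "y = (\<Sum>i\<in>UNIV. qsc (y i) (e i))"
    proof
      fix j
      have "(\<Sum>i\<in>UNIV. qsc (y i) (e i)) j = (\<Sum>i\<in>UNIV. y i * e i j)"
        by (rule fun_sum_apply)
      also have "\<dots> = (\<Sum>i\<in>UNIV. if i = j then y i else 0)"
        by (rule sum.cong) (auto simp: e_def)
      also have "\<dots> = y j" by simp
      finally show "y j = (\<Sum>i\<in>UNIV. qsc (y i) (e i)) j" by simp
    qed
    then have "f y = f (\<Sum>i\<in>UNIV. qsc (y i) (e i))" by simp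
    also have "\<dots> = (\<Sum>i\<in>UNIV. f (qsc (y i) (e i)))" by (rule L.sum)
    also have "\<dots> = (\<Sum>i\<in>UNIV. y i * c i)" unfolding c_def using L.scale by simp
    finally show ?thesis by (simp add: mult.commute)
  qed
  show ?thesis using fU fx rep by (intro exI[of _ c]) auto
qed

lemma exists_outside:
  fixes A :: "'n::finite \<Rightarrow> 'm::finite \<Rightarrow> int" and U :: "('n \<Rightarrow> rat) set"
  assumes "finite U" "card U < toric_height A"
  shows "\<exists>x. (\<forall>j. (\<Sum>i\<in>UNIV. x i * of_int (A i j)) = 0) \<and> x \<notin> module.span qsc U"
proof (rule ccontr)
  interpret V: vector_space "qsc :: rat \<Rightarrow> ('n \<Rightarrow> rat) \<Rightarrow> ('n \<Rightarrow> rat)" by (rule vs_q)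
  assume "\<not> ?thesis"
  then have "{x :: 'n \<Rightarrow> rat. \<forall>j. (\<Sum>i\<in>UNIV. x i * of_int (A i j)) = 0} \<subseteq> V.span U" by blast
  then have "toric_height A \<le> card U" unfolding toric_height_def
    by (rule V.dim_le_card) (rule assms(1))
  then show False using assms(2) by simp
qed

lemma int_scale:
  fixes c :: "'n::finite \<Rightarrow> rat"
  shows "\<exists>N::int. N > 0 \<and> (\<exists>d::'n \<Rightarrow> int. \<forall>i. of_int (d i) = of_int N * c i)"
proof -
  define p where "p i = fst (quotient_of (c i))" for i
  define q where "q i = snd (quotient_of (c i))" for i
  have cq: "c i = of_int (p i) / of_int (q i)" for i
    unfolding p_def q_def by (rule quotient_of_div[of "c i"]) simp
  have qpos: "q i > 0" for i unfolding q_def by (rule quotient_of_denom_pos[of "c i" "fst (quotient_of (c i))"]) simp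
  define N where "N = (\<Prod>i\<in>UNIV. q i)"
  have Npos: "N > 0" unfolding N_def using qpos by (simp add: prod_pos)
  define d where "d i = p i * (\<Prod>j\<in>UNIV - {i}. q j)" for i
  have "of_int (d i) = of_int N * c i" for i
  proof -
    have "N = q i * (\<Prod>j\<in>UNIV - {i}. q j)" unfolding N_def
      by (simp add: prod.remove)
    then have "of_int N * c i = of_int (q i) * of_int (\<Prod>j\<in>UNIV - {i}. q j) * (of_int (p i) / of_int (q i))"
      by (simp add: cq)
    also have "\<dots> = of_int (p i) * of_int (\<Prod>j\<in>UNIV - {i}. q j)"
      using qpos[of i] by (simp add: field_simps)
    finally show ?thesis by (simp add: d_def)
  qed
  then show ?thesis using Npos by blast
qed

lemma split_functional:
  fixes A :: "'n::finite \<Rightarrow> 'm::finite \<Rightarrow> int" and U :: "('n \<Rightarrow> rat) set"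
  assumes "finite U" "card U < toric_height A"
  shows "\<exists>(d::'n \<Rightarrow> int) (w::'n \<Rightarrow> int). (\<forall>u\<in>U. (\<Sum>i\<in>UNIV. of_int (d i) * u i) = 0) \<and>
            (\<forall>j. (\<Sum>i\<in>UNIV. w i * A i j) = 0) \<and> (\<Sum>i\<in>UNIV. d i * w i) \<noteq> 0"
proof -
  obtain x where x: "\<forall>j. (\<Sum>i\<in>UNIV. x i * of_int (A i j)) = 0" "x \<notin> module.span qsc U"
    using exists_outside[OF assms] by blast
  obtain c :: "'n \<Rightarrow> rat" where c: "\<forall>u\<in>U. (\<Sum>i\<in>UNIV. c i * u i) = 0" "(\<Sum>i\<in>UNIV. c i * x i) \<noteq> 0"
    using separate_functional[OF x(2)] by blast
  obtain N d where Nd: "N > 0" "\<forall>i. of_int (d i) = of_int N * c i" using int_scale[of c] by blast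
  obtain M w where Mw: "M > 0" "\<forall>i. of_int (w i) = of_int M * x i" using int_scale[of x] by blast
  have 1: "(\<Sum>i\<in>UNIV. of_int (d i) * u i) = 0" if "u \<in> U" for u
  proof -
    have "(\<Sum>i\<in>UNIV. of_int (d i) * u i) = of_int N * (\<Sum>i\<in>UNIV. c i * u i)"
      by (simp add: Nd(2) sum_distrib_left mult.assoc)
    then show ?thesis using c(1) that by simp
  qed
  have 2: "(\<Sum>i\<in>UNIV. w i * A i j) = 0" for j
  proof -
    have "(of_int (\<Sum>i\<in>UNIV. w i * A i j) :: rat) = of_int M * (\<Sum>i\<in>UNIV. x i * of_int (A i j))"
      by (simp add: Mw(2) sum_distrib_left mult.assoc)
    then have "(of_int (\<Sum>i\<in>UNIV. w i * A i j) :: rat) = 0" using x(1) by simp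
    then show ?thesis by (metis of_int_eq_0_iff)
  qed
  have 3: "(\<Sum>i\<in>UNIV. d i * w i) \<noteq> 0"
  proof -
    have "(of_int (\<Sum>i\<in>UNIV. d i * w i) :: rat) = of_int N * of_int M * (\<Sum>i\<in>UNIV. c i * x i)"
      by (simp add: Nd(2) Mw(2) sum_distrib_left algebra_simps)
    then have "(of_int (\<Sum>i\<in>UNIV. d i * w i) :: rat) \<noteq> 0" using c(2) Nd(1) Mw(1) by simp
    then show ?thesis by (metis of_int_0)
  qed
  show ?thesis using 1 2 3 by blast
qed



definition vecab :: "('n \<Rightarrow>\<^sub>0 nat) \<Rightarrow> ('n \<Rightarrow>\<^sub>0 nat) \<Rightarrow> ('n \<Rightarrow> rat)" where
  "vecab a b = (\<lambda>i. of_nat (Poly_Mapping.lookup a i) - of_nat (Poly_Mapping.lookup b i))"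

definition posp :: "('n::finite \<Rightarrow> int) \<Rightarrow> ('n \<Rightarrow>\<^sub>0 nat)" where
  "posp w = Abs_poly_mapping (\<lambda>i. nat (w i))"

lemma lookup_posp: "Poly_Mapping.lookup (posp w) i = nat (w i)"
  unfolding posp_def by (simp add: Abs_poly_mapping_inverse)

lemma posp_diff:
  fixes w :: "'n::finite \<Rightarrow> int"
  shows "(\<Sum>i\<in>UNIV. int (Poly_Mapping.lookup (posp w) i) * c i) - (\<Sum>i\<in>UNIV. int (Poly_Mapping.lookup (posp (-w)) i) * c i)
     = (\<Sum>i\<in>UNIV. w i * c i)"
proof -
  have "int (nat (w i)) * c i - int (nat (- w i)) * c i = w i * c i" for i
    by (simp add: left_diff_distrib[symmetric])
  then show ?thesis by (simp add: lookup_posp sum_subtractf[symmetric])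
qed

lemma half:
  fixes A :: "'n::finite \<Rightarrow> 'm::finite \<Rightarrow> int" and U :: "('n \<Rightarrow> rat) set"
  assumes "finite U" "card U < toric_height A"
  shows "\<exists>(A'::'n \<Rightarrow> nat \<Rightarrow> int) m. (\<forall>i j. m \<le> j \<longrightarrow> A' i j = 0) \<and>
     (toric_ideal A' :: ('n,'k::field) mpoly set) \<subseteq> toric_ideal A \<and> (toric_ideal A' :: ('n,'k) mpoly set) \<noteq> toric_ideal A \<and>
     (\<forall>a b. cfg_deg A a = cfg_deg A b \<and> vecab a b \<in> U \<longrightarrow> (monom a - monom b :: ('n,'k) mpoly) \<in> toric_ideal A')"
proof -
  obtain d w where dw: "\<forall>u\<in>U. (\<Sum>i\<in>UNIV. of_int (d i) * u i) = 0"
     "\<forall>j. (\<Sum>i\<in>UNIV. w i * A i j) = 0" "(\<Sum>i\<in>UNIV. d i * w i) \<noteq> 0"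
    using split_functional[OF assms] by blast
  obtain A' :: "'n \<Rightarrow> nat \<Rightarrow> int" and m where A': "\<forall>i j. m \<le> j \<longrightarrow> A' i j = 0"
     "\<forall>u v. cfg_deg A' u = cfg_deg A' v \<longleftrightarrow> cfg_deg A u = cfg_deg A v \<and> lin d u = lin d v"
    using exists_ext[of A d] by blast
  have sub: "(toric_ideal A' :: ('n,'k) mpoly set) \<subseteq> toric_ideal A"
    unfolding toric_ideal_tker by (rule tker_refine) (use A'(2) in blast)
  have wA: "cfg_deg A (posp w) = cfg_deg A (posp (-w))"
  proof
    fix j
    have "cfg_deg A (posp w) j - cfg_deg A (posp (-w)) j = (\<Sum>i\<in>UNIV. w i * A i j)"
      unfolding cfg_deg_def by (rule posp_diff)
    then show "cfg_deg A (posp w) j = cfg_deg A (posp (-w)) j" using dw(2) by simp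
  qed
  have wd: "lin d (posp w) \<noteq> lin d (posp (-w))"
  proof -
    have "lin d (posp w) - lin d (posp (-w)) = (\<Sum>i\<in>UNIV. w i * d i)"
      unfolding lin_def by (rule posp_diff)
    then show ?thesis using dw(3) by (simp add: mult.commute)
  qed
  have "(monom (posp w) - monom (posp (-w)) :: ('n,'k) mpoly) \<in> toric_ideal A"
    using wA by (simp add: binom_toric)
  moreover have "(monom (posp w) - monom (posp (-w)) :: ('n,'k) mpoly) \<notin> toric_ideal A'"
    using wd A'(2) by (simp add: binom_toric)
  ultimately have ne: "(toric_ideal A' :: ('n,'k) mpoly set) \<noteq> toric_ideal A" by blast
  have gen: "(monom a - monom b :: ('n,'k) mpoly) \<in> toric_ideal A'"
    if "cfg_deg A a = cfg_deg A b" "vecab a b \<in> U" for a b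
  proof -
    have "(\<Sum>i\<in>UNIV. of_int (d i) * vecab a b i) = 0" using dw(1) that(2) by blast
    then have "(of_int (lin d a - lin d b) :: rat) = 0"
      by (simp add: lin_def vecab_def sum_subtractf[symmetric] algebra_simps)
    then have "lin d a = lin d b" by simp
    then show ?thesis using that(1) A'(2) by (simp add: binom_toric)
  qed
  show ?thesis
  proof (intro exI[of _ A'] exI[of _ m] conjI)
    show "\<forall>i j. m \<le> j \<longrightarrow> A' i j = 0" by (rule A'(1))
    show "(toric_ideal A' :: ('n,'k) mpoly set) \<subseteq> toric_ideal A" by (rule sub)
    show "(toric_ideal A' :: ('n,'k) mpoly set) \<noteq> toric_ideal A" by (rule ne)
    show "\<forall>a b. cfg_deg A a = cfg_deg A b \<and> vecab a b \<in> U \<longrightarrow> (monom a - monom b :: ('n,'k) mpoly) \<in> toric_ideal A'"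
      using gen by blast
  qed
qed



theorem proposition2p3:
  fixes A :: "'n::finite \<Rightarrow> 'm::finite \<Rightarrow> int"
  assumes "pointed_cfg A"
    and "toric_height A \<ge> 2"
    and "stci_binomials A TYPE('k::field)"
  shows "radical_splittable (toric_ideal A :: ('n, 'k) mpoly set)"
proof -
  define I where "I = (toric_ideal A :: ('n, 'k) mpoly set)"
  define r where "r = toric_height A"
  define Q where "Q t = (\<exists>Bs. length Bs = t \<and> (\<forall>B\<in>set Bs. is_binomial B \<and> B \<in> I) \<and> I = rad (gen_ideal (set Bs)))" for t
  have ex: "\<exists>t. Q t" using exists_Bs[of A, where 'k='k] unfolding Q_def I_def by blast
  have "bar I = (LEAST t. Q t)" unfolding bar_def Q_def by simp
  then have "Q (bar I)" using LeastI_ex[OF ex] by simp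
  moreover have "bar I = r" using assms(3) unfolding stci_binomials_def r_def I_def by simp
  ultimately have "Q r" by simp
  then obtain Bs where Bs: "length Bs = r" "\<forall>B\<in>set Bs. is_binomial B \<and> B \<in> I" "I = rad (gen_ideal (set Bs))"
    unfolding Q_def by blast
  have r2: "r \<ge> 2" using assms(2) r_def by simp
  obtain B1 Bs' where BB: "Bs = B1 # Bs'" using Bs(1) r2 by (cases Bs) auto
  define ab where "ab B = (SOME p. B = monom (fst p) - monom (snd p))" for B :: "('n,'k) mpoly"
  have abP: "B = monom (fst (ab B)) - monom (snd (ab B))" if "B \<in> set Bs" for B
  proof -
    from Bs(2) that obtain u v where "B = monom u - monom v" unfolding is_binomial_def by blast
    then have "\<exists>p. B = monom (fst p) - monom (snd p)" by (intro exI[of _ "(u,v)"]) simp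
    then show ?thesis unfolding ab_def by (rule someI_ex)
  qed
  have abC: "cfg_deg A (fst (ab B)) = cfg_deg A (snd (ab B))" if "B \<in> set Bs" for B
  proof -
    have "B \<in> I" using Bs(2) that by blast
    then have "(monom (fst (ab B)) - monom (snd (ab B)) :: ('n,'k) mpoly) \<in> toric_ideal A"
      using abP[OF that] unfolding I_def by simp
    then show ?thesis by (simp add: binom_toric)
  qed
  define vB where "vB B = vecab (fst (ab B)) (snd (ab B))" for B
  define U1 where "U1 = {vB B1}"
  define U2 where "U2 = vB ` set Bs'"
  have c1: "card U1 < toric_height A" using r2 r_def by (simp add: U1_def)
  have "card U2 \<le> length Bs'" unfolding U2_def
    using card_image_le[of "set Bs'" vB] card_length[of Bs'] by simp
  then have c2: "card U2 < toric_height A" using Bs(1) BB r_def by simp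
  obtain A1 :: "'n \<Rightarrow> nat \<Rightarrow> int" and m1 where H1: "\<forall>i j. m1 \<le> j \<longrightarrow> A1 i j = 0"
    "(toric_ideal A1 :: ('n,'k) mpoly set) \<subseteq> toric_ideal A" "(toric_ideal A1 :: ('n,'k) mpoly set) \<noteq> toric_ideal A"
    "\<forall>a b. cfg_deg A a = cfg_deg A b \<and> vecab a b \<in> U1 \<longrightarrow> (monom a - monom b :: ('n,'k) mpoly) \<in> toric_ideal A1"
    using half[of U1 A, where 'k='k] c1 by (auto simp: U1_def)
  obtain A2 :: "'n \<Rightarrow> nat \<Rightarrow> int" and m2 where H2: "\<forall>i j. m2 \<le> j \<longrightarrow> A2 i j = 0"
    "(toric_ideal A2 :: ('n,'k) mpoly set) \<subseteq> toric_ideal A" "(toric_ideal A2 :: ('n,'k) mpoly set) \<noteq> toric_ideal A"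
    "\<forall>a b. cfg_deg A a = cfg_deg A b \<and> vecab a b \<in> U2 \<longrightarrow> (monom a - monom b :: ('n,'k) mpoly) \<in> toric_ideal A2"
    using half[of U2 A, where 'k='k] c2 by (auto simp: U2_def)
  have inB: "B = monom (fst (ab B)) - monom (snd (ab B)) \<and> cfg_deg A (fst (ab B)) = cfg_deg A (snd (ab B))"
    if "B \<in> set Bs" for B
    using abP[OF that] abC[OF that] by simp
  have B1in: "B1 \<in> toric_ideal A1"
  proof -
    have "B1 \<in> set Bs" using BB by simp
    then have "B1 = monom (fst (ab B1)) - monom (snd (ab B1))" "cfg_deg A (fst (ab B1)) = cfg_deg A (snd (ab B1))"
      using inB by blast+
    moreover have "vecab (fst (ab B1)) (snd (ab B1)) \<in> U1" by (simp add: U1_def vB_def)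
    ultimately show ?thesis using H1(4) by metis
  qed
  have B2in: "B \<in> toric_ideal A2" if "B \<in> set Bs'" for B
  proof -
    have "B \<in> set Bs" using BB that by simp
    then have "B = monom (fst (ab B)) - monom (snd (ab B))" "cfg_deg A (fst (ab B)) = cfg_deg A (snd (ab B))"
      using inB by blast+
    moreover have "vecab (fst (ab B)) (snd (ab B)) \<in> U2" using that by (simp add: U2_def vB_def)
    ultimately show ?thesis using H2(4) by metis
  qed
  define S where "S = {f + g | f g. f \<in> (toric_ideal A1 :: ('n,'k) mpoly set) \<and> g \<in> toric_ideal A2}"
  have S0: "0 \<in> S" unfolding S_def using toric_ideal_ideal(1)[of A1] toric_ideal_ideal(1)[of A2]
    by (metis (mono_tags, lifting) add_0 mem_Collect_eq)
  have Sadd: "x + y \<in> S" if xS: "x \<in> S" and yS: "y \<in> S" for x y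
  proof -
    obtain f1 g1 where 1: "x = f1 + g1" "f1 \<in> toric_ideal A1" "g1 \<in> toric_ideal A2" using xS S_def by blast
    obtain f2 g2 where 2: "y = f2 + g2" "f2 \<in> toric_ideal A1" "g2 \<in> toric_ideal A2" using yS S_def by blast
    have "x + y = (f1 + f2) + (g1 + g2)" using 1 2 by (simp add: algebra_simps)
    moreover have "f1 + f2 \<in> toric_ideal A1" using 1 2 toric_ideal_ideal(2) by blast
    moreover have "g1 + g2 \<in> toric_ideal A2" using 1 2 toric_ideal_ideal(2) by blast
    ultimately show ?thesis unfolding S_def by blast
  qed
  have Smult: "a * x \<in> S" if xS: "x \<in> S" for a x
  proof -
    obtain f1 g1 where 1: "x = f1 + g1" "f1 \<in> toric_ideal A1" "g1 \<in> toric_ideal A2" using xS S_def by blast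
    have "a * x = a * f1 + a * g1" using 1 by (simp add: algebra_simps)
    moreover have "a * f1 \<in> toric_ideal A1" using 1 toric_ideal_ideal(3) by blast
    moreover have "a * g1 \<in> toric_ideal A2" using 1 toric_ideal_ideal(3) by blast
    ultimately show ?thesis unfolding S_def by blast
  qed
  have BsS: "set Bs \<subseteq> S"
  proof
    fix B assume "B \<in> set Bs"
    then consider "B = B1" | "B \<in> set Bs'" using BB by auto
    then show "B \<in> S"
    proof cases
      case 1
      have "B = B1 + 0" using 1 by simp
      then show ?thesis unfolding S_def using B1in toric_ideal_ideal(1)[of A2] by blast
    next
      case 2
      have "B = 0 + B" by simp
      then show ?thesis unfolding S_def using B2in[OF 2] toric_ideal_ideal(1)[of A1] by blast
    qed
  qed
  have genS: "gen_ideal (set Bs) \<subseteq> S"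
    by (rule gen_ideal_least[OF BsS S0]) (auto intro: Sadd Smult)
  have SI: "S \<subseteq> I"
  proof
    fix x assume "x \<in> S"
    then obtain f g where 1: "x = f + g" "f \<in> toric_ideal A1" "g \<in> toric_ideal A2" using S_def by blast
    then have "f \<in> I" "g \<in> I" using H1(2) H2(2) I_def by blast+
    then show "x \<in> I" using 1 toric_ideal_ideal(2) I_def by blast
  qed
  have "I = rad S"
  proof
    show "I \<subseteq> rad S"
    proof
      fix f assume "f \<in> I"
      then obtain k where "f ^ k \<in> gen_ideal (set Bs)" using Bs(3) rad_def by blast
      then show "f \<in> rad S" using genS unfolding rad_def by blast
    qed
    show "rad S \<subseteq> I"
    proof
      fix f assume "f \<in> rad S"
      then obtain k where "f ^ k \<in> S" using rad_def by blast
      then have "f ^ k \<in> toric_ideal A" using SI I_def by blast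
      then show "f \<in> I" unfolding I_def by (rule radical_toric)
    qed
  qed
  then show ?thesis unfolding radical_splittable_def
    using H1(1,3) H2(1,3) unfolding S_def I_def by blast
qed

end
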